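(* Let $Z$ be a continuous random variable with CDF $F$ and density $f$ bounded by $L$, whose support is contained in $[0,1]$ with $\sup\{z : F(z)=0\} = 0$ and $\inf\{z : F(z)=1\} = 1$; define $F^{-1}(y) = \inf\{z : F(z) = y\}$. Let $\eta>0$ and run GBPA with the stochastically smoothed potential $\tilde\Phi$ whose perturbation is $\eta Z$. Then for every gain sequence $g_1,\dots,g_T\in[-1,0]^N$, every round $t$, and every $\epsilon\in(0,1)$, $$\mathbb{E}\big[D_{\tilde\Phi}(\hat G_t,\hat G_{t-1}) \,\big|\, i_1,\dots,i_{t-1}\big] \le NL\Big(\frac{1}{2\eta\epsilon} + 1 - F^{-1}(1-\epsilon)\Big).$$
   Context: Adversarial multi-armed bandit: $N$ arms, $T$ rounds; an oblivious adversary fixes $g_1,\dots,g_T \in [-1,0]^N$ in advance. For a random variable $W$ with a continuous distribution and finite expectation, the stochastically smoothed potential is $\tilde\Phi(G) = \mathbb{E}[\max_{i}(G_i + W_i)]$ for $G\in\mathbb{R}^N$, $W_1,\dots,W_N$ i.i.d. copies of $W$; it is convex and differentiable, $\nabla_i\tilde\Phi(G) = \mathbb{P}(i = \arg\max_j (G_j+W_j))$. "Perturbation $\eta Z$" means $W=\eta Z$. GBPA$(\tilde\Phi)$: $\hat G_0 = 0$; for $t=1,\dots,T$: $p_t = \nabla\tilde\Phi(\hat G_{t-1})$, draw $i_t \sim p_t$, observe only $g_{t,i_t}$, set $\hat g_t = \frac{g_{t,i_t}}{p_{t,i_t}} e_{i_t}$, $\hat G_t = \hat G_{t-1} + \hat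 g_t$. Bregman divergence: $D_{\tilde\Phi}(x,y) = \tilde\Phi(x)-\tilde\Phi(y)-\langle\nabla\tilde\Phi(y), x-y\rangle$. *)

theory Defs
  imports "HOL-Probability.Probability"
begin

definition Zdist :: "(real \<Rightarrow> real) \<Rightarrow> real measure" where
  "Zdist f = density lborel (\<lambda>z. ennreal (f z))"

definition inv_cdf :: "(real \<Rightarrow> real) \<Rightarrow> real \<Rightarrow> real" where
  "inv_cdf f y = Inf {z. cdf (Zdist f) z = y}"

definition smoothed_pot :: "nat \<Rightarrow> real \<Rightarrow> (real \<Rightarrow> real) \<Rightarrow> (nat \<Rightarrow> real) \<Rightarrow> real" where
  "smoothed_pot N eta f G =
     integral\<^sup>L (PiM {..<N} (\<lambda>_. Zdist f)) (\<lambda>w. Max ((\<lambda>i. G i + eta * w i) ` {..<N}))"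

definition grad :: "nat \<Rightarrow> real \<Rightarrow> (real \<Rightarrow> real) \<Rightarrow> (nat \<Rightarrow> real) \<Rightarrow> nat \<Rightarrow> real" where
  "grad N eta f G i = deriv (\<lambda>x. smoothed_pot N eta f (G(i := x))) (G i)"

definition bregman :: "nat \<Rightarrow> real \<Rightarrow> (real \<Rightarrow> real) \<Rightarrow> (nat \<Rightarrow> real) \<Rightarrow> (nat \<Rightarrow> real) \<Rightarrow> real" where
  "bregman N eta f x y =
     smoothed_pot N eta f x - smoothed_pot N eta f y - (\<Sum>i<N. grad N eta f y i * (x i - y i))"

text \<open>GBPA cumulative gain estimate \<open>hat G_s\<close> along a history of drawn arms
  (hist s = arm i_s drawn in round s), for gains g s i = g_{s,i}.\<close>
fun gbpa_G :: "nat \<Rightarrow> real \<Rightarrow> (real \<Rightarrow> real) \<Rightarrow> (nat \<Rightarrow> nat \<Rightarrow> real) \<Rightarrow> (nat \<Rightarrow> nat)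
                 \<Rightarrow> nat \<Rightarrow> (nat \<Rightarrow> real)" where
  "gbpa_G N eta f g hist 0 = (\<lambda>_. 0)"
| "gbpa_G N eta f g hist (Suc s) =
     (let G = gbpa_G N eta f g hist s; i = hist (Suc s)
      in G(i := G i + g (Suc s) i / grad N eta f G i))"

end

theory Submission
  imports Defs
begin


lemma zdist_le:
  assumes fm: "f \<in> borel_measurable borel" and fn: "\<forall>z. 0 \<le> f z" and fb: "\<forall>z. f z \<le> L"
    and A: "A \<in> sets borel"
  shows "emeasure (Zdist f) A \<le> ennreal L * emeasure lborel A"
proof -
  have "emeasure (Zdist f) A = (\<integral>\<^sup>+ x. ennreal (f x) * indicator A x \<partial>lborel)"
    unfolding Zdist_def using fm A by (subst emeasure_density) auto
  also have "\<dots> \<le> (\<integral>\<^sup>+ x. ennreal L * indicator A x \<partial>lborel)"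
    by (intro nn_integral_mono) (auto simp: indicator_def fb intro: ennreal_leI)
  also have "\<dots> = ennreal L * emeasure lborel A"
    using A by (simp add: nn_integral_cmult_indicator)
  finally show ?thesis .
qed

lemma zdist_inv_cdf:
  assumes fm: "f \<in> borel_measurable borel" and fn: "\<forall>z. 0 \<le> f z" and fb: "\<forall>z. f z \<le> L"
    and Zp: "prob_space (Zdist f)"
    and Zs: "emeasure (Zdist f) (- {0..1}) = 0"
    and eps: "0 < eps" "eps < 1"
  shows "eps \<le> L * (1 - inv_cdf f (1 - eps))"
proof -
  let ?M = "Zdist f"
  have setsM: "sets ?M = sets borel" unfolding Zdist_def by simp
  interpret real_distribution ?M
    using Zp setsM by (simp add: real_distribution_def real_distribution_axioms_def)
  have L0: "0 \<le> L" using fn fb by (meson order_trans)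
  have mle: "measure ?M A \<le> L * measure lborel A" if "A \<in> sets borel" "emeasure lborel A < \<infinity>" for A
  proof -
    have "emeasure ?M A \<le> ennreal L * emeasure lborel A" using zdist_le[OF fm fn fb that(1)] .
    also have "\<dots> = ennreal (L * measure lborel A)"
      using that(2) L0 by (simp add: emeasure_eq_ennreal_measure ennreal_mult)
    finally have "enn2real (emeasure ?M A) \<le> enn2real (ennreal (L * measure lborel A))"
      by (intro enn2real_mono) auto
    thus ?thesis by (simp add: measure_def L0 measure_nonneg)
  qed
  have Fc: "continuous_on UNIV (cdf ?M)"
  proof -
    have "isCont (cdf ?M) x" for x
    proof -
      have "measure ?M {x} \<le> L * measure lborel {x}" by (rule mle) auto
      hence "measure ?M {x} = 0" by (simp add: measure_nonneg antisym)
      thus ?thesis by (simp add: isCont_cdf)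
    qed
    thus ?thesis by (simp add: continuous_on_eq_continuous_at)
  qed
  have F1: "cdf ?M 1 = 1"
  proof -
    have "measure ?M {1<..} \<le> measure ?M (- {0..1})"
      by (intro finite_measure_mono) auto
    also have "\<dots> = 0" using Zs by (simp add: measure_def)
    finally have "measure ?M {1<..} = 0" by (simp add: antisym measure_nonneg)
    moreover have "measure ?M {..1} = 1 - measure ?M {1<..}"
      using prob_compl[of "{1<..}"] by (simp add: Compl_eq_Diff_UNIV[symmetric] not_less atMost_def)
    ultimately show ?thesis by (simp add: cdf_def)
  qed
  have F0: "cdf ?M 0 = 0"
  proof -
    have "measure ?M {..0} \<le> measure ?M (- {0..1} \<union> {0})"
      by (intro finite_measure_mono) auto
    also have "\<dots> \<le> measure ?M (- {0..1}) + measure ?M {0}"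
      by (intro measure_subadditive) auto
    also have "measure ?M (- {0..1}) = 0" using Zs by (simp add: measure_def)
    also have "measure ?M {0} \<le> L * measure lborel {0::real}" by (rule mle) auto
    finally show ?thesis by (simp add: cdf_def antisym measure_nonneg)
  qed
  obtain z1 where z1: "0 \<le> z1" "z1 \<le> 1" "cdf ?M z1 = 1 - eps"
    using IVT'[of "cdf ?M" 0 "1 - eps" 1] F0 F1 eps Fc continuous_on_subset by fastforce
  have bdd: "bdd_below {z. cdf ?M z = 1 - eps}"
  proof (rule bdd_belowI[of _ 0])
    fix z assume "z \<in> {z. cdf ?M z = 1 - eps}"
    hence "cdf ?M z = 1 - eps" by simp
    show "0 \<le> z"
    proof (rule ccontr)
      assume "\<not> 0 \<le> z"
      hence "cdf ?M z \<le> cdf ?M 0" by (intro cdf_nondecreasing) auto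
      thus False using F0 \<open>cdf ?M z = 1 - eps\<close> eps by simp
    qed
  qed
  have "inv_cdf f (1 - eps) \<le> z1" unfolding inv_cdf_def
    by (rule cInf_lower) (use z1 bdd in auto)
  moreover have "eps \<le> L * (1 - z1)"
  proof (cases "z1 = 1")
    case True thus ?thesis using z1 F1 eps by simp
  next
    case False
    hence "z1 < 1" using z1 by simp
    hence "cdf ?M 1 - cdf ?M z1 = measure ?M {z1<..1}" by (rule cdf_diff_eq)
    also have "\<dots> \<le> L * measure lborel {z1<..1}" by (rule mle) (use \<open>z1 < 1\<close> in auto)
    also have "\<dots> = L * (1 - z1)" using \<open>z1 < 1\<close> by simp
    finally show ?thesis using F1 z1 by simp
  qed
  ultimately show ?thesis using L0 by (smt (verit) mult_left_mono)
qed



definition psi :: "real \<Rightarrow> real \<Rightarrow> real \<Rightarrow> real \<Rightarrow> real" where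
  "psi x y a m = max (y + a) m - max (x + a) m - (if m \<le> x + a then y - x else 0)"

lemma psi_nonneg: "0 \<le> psi x y a m"
  unfolding psi_def by (auto simp: max_def)

lemma psi_le: "psi x y a m \<le> \<bar>y - x\<bar> * (if min (m-x) (m-y) \<le> a \<and> a \<le> max (m-x) (m-y) then 1 else 0)"
  unfolding psi_def by (auto simp: max_def min_def abs_if)

lemma quad_deriv:
  fixes h :: "real \<Rightarrow> real"
  assumes b: "\<And>y. \<bar>h y - h x - q*(y-x)\<bar> \<le> c*(y-x)^2" and c: "0 \<le> c"
  shows "(h has_field_derivative q) (at x)"
  unfolding has_field_derivative_iff
proof (rule LIM_I)
  fix r :: real assume r: "0 < r"
  show "\<exists>s>0. \<forall>y. y \<noteq> x \<and> norm (y - x) < s \<longrightarrow> norm ((h y - h x) / (y - x) - q) < r"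
  proof (intro exI[of _ "r/(c+1)"] conjI allI impI)
    show "0 < r/(c+1)" using r c by simp
    fix y assume y: "y \<noteq> x \<and> norm (y - x) < r/(c+1)"
    have d: "\<bar>y - x\<bar> > 0" using y by simp
    have "(h y - h x) / (y - x) - q = (h y - h x - q*(y-x)) / (y - x)"
      using y by (simp add: field_simps)
    hence "\<bar>(h y - h x) / (y - x) - q\<bar> = \<bar>h y - h x - q*(y-x)\<bar> / \<bar>y - x\<bar>" by (simp add: abs_divide)
    also have "\<dots> \<le> c*(y-x)^2 / \<bar>y - x\<bar>" by (rule divide_right_mono[OF b]) simp
    also have "\<dots> = c * \<bar>y - x\<bar>"
    proof -
      have e: "(y-x)^2 = \<bar>y-x\<bar> * \<bar>y-x\<bar>" by (simp add: power2_eq_square)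
      have aux: "\<And>a::real. a \<noteq> 0 \<Longrightarrow> c*(a*a)/a = c*a" by simp
      show ?thesis unfolding e by (rule aux) (use d in simp)
    qed
    also have "\<dots> \<le> c * (r/(c+1))" using y c by (intro mult_left_mono) auto
    also have "\<dots> < r" using r c by (simp add: field_simps)
    finally show "norm ((h y - h x) / (y - x) - q) < r" by simp
  qed
qed

lemma Max_diff:
  fixes a b :: "nat \<Rightarrow> real"
  assumes S: "finite S" and ab: "\<And>j. j\<in>S \<Longrightarrow> \<bar>a j - b j\<bar> \<le> B" and B: "0 \<le> B"
  shows "\<bar>Max (a`S) - Max (b`S)\<bar> \<le> B"
proof (cases "S = {}")
  case True thus ?thesis using B by simp
next
  case False
  have "Max (a`S) \<in> a`S" "Max (b`S) \<in> b`S" using S False by (intro Max_in; simp)+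
  then obtain j1 j2 where j1: "j1 \<in> S" "Max (a`S) = a j1" and j2: "j2 \<in> S" "Max (b`S) = b j2" by blast
  have "b j1 \<le> Max (b`S)" "a j2 \<le> Max (a`S)" using j1(1) j2(1) S by (intro Max_ge; simp)+
  thus ?thesis using ab[OF j1(1)] ab[OF j2(1)] j1 j2 by (simp add: abs_le_iff)
qed

lemma arith_bound:
  fixes q D c e :: real
  assumes q: "0 < q" and D: "0 \<le> D" "D \<le> 1" "D \<le> c / q^2" and c: "0 \<le> c" and e: "0 < e"
  shows "q * D \<le> c/(2*e) + e"
proof (cases "q^2 \<le> c")
  case True
  have "q * D \<le> q" using q D by (simp add: mult_left_le)
  also have "q \<le> q^2/(2*e) + e"
  proof -
    have "0 \<le> ((q-e)^2 + e^2)/(2*e)" using e by simp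
    also have "((q-e)^2 + e^2)/(2*e) = q^2/(2*e) + e - q" using e by (simp add: field_simps power2_eq_square)
    finally show ?thesis by simp
  qed
  also have "\<dots> \<le> c/(2*e) + e" using True e by (simp add: divide_right_mono)
  finally show ?thesis .
next
  case False
  define u where "u = c / q"
  have "q * D \<le> q * (c / q^2)" by (intro mult_left_mono) (use q D in auto)
  also have "\<dots> = u" using q by (simp add: u_def power2_eq_square)
  finally have 1: "q * D \<le> u" .
  have u0: "0 \<le> u" using c q by (simp add: u_def)
  have "u \<le> u^2/(2*e) + e"
  proof -
    have "0 \<le> ((u-e)^2 + e^2)/(2*e)" using e by simp
    also have "((u-e)^2 + e^2)/(2*e) = u^2/(2*e) + e - u" using e by (simp add: field_simps power2_eq_square)
    finally show ?thesis by simp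
  qed
  moreover have "u^2 \<le> c"
  proof -
    have "u^2 = c * (c / q^2)" using q by (simp add: u_def power2_eq_square)
    also have "\<dots> \<le> c * 1" using False q c by (intro mult_left_mono) auto
    finally show ?thesis by simp
  qed
  ultimately have "u \<le> c/(2*e) + e" using e by (smt (verit) divide_right_mono)
  thus ?thesis using 1 by simp
qed

context
  fixes N :: nat and eta :: real and f :: "real \<Rightarrow> real" and L :: real
  assumes fm: "f \<in> borel_measurable borel" and fn: "\<forall>z. 0 \<le> f z" and fb: "\<forall>z. f z \<le> L"
    and Zp: "prob_space (Zdist f)" and eta: "eta > 0"
begin

lemma L0: "0 \<le> L" using fn fb by (meson order_trans)

lemma inner_bound:
  "(\<integral>\<^sup>+ z. ennreal (psi x y (eta * z) m) \<partial>Zdist f) \<le> ennreal (L / eta * (y - x)^2)"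
proof -
  define lo where "lo = min (m-x) (m-y) / eta"
  define hi where "hi = max (m-x) (m-y) / eta"
  have lohi: "lo \<le> hi" "hi - lo = \<bar>y - x\<bar> / eta" using eta
    by (auto simp: lo_def hi_def min_def max_def divide_simps abs_if)
  have "(\<integral>\<^sup>+ z. ennreal (psi x y (eta * z) m) \<partial>Zdist f)
      = (\<integral>\<^sup>+ z. ennreal (f z) * ennreal (psi x y (eta * z) m) \<partial>lborel)"
    unfolding Zdist_def using fm by (subst nn_integral_density) (auto simp: psi_def)
  also have "\<dots> \<le> (\<integral>\<^sup>+ z. ennreal (L * \<bar>y - x\<bar>) * indicator {lo..hi} z \<partial>lborel)"
  proof (intro nn_integral_mono)
    fix z
    have iff: "(min (m-x) (m-y) \<le> eta * z \<and> eta * z \<le> max (m-x) (m-y)) \<longleftrightarrow> z \<in> {lo..hi}"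
      using eta by (auto simp: lo_def hi_def pos_divide_le_eq pos_le_divide_eq mult.commute)
    have "f z * psi x y (eta * z) m \<le> L * \<bar>y - x\<bar> * indicator {lo..hi} z"
      using psi_le[of x y "eta*z" m] psi_nonneg[of x y "eta*z" m] fn fb L0
      unfolding iff by (auto simp: indicator_def intro: mult_mono)
    hence le: "ennreal (f z * psi x y (eta * z) m) \<le> ennreal (L * \<bar>y - x\<bar> * indicator {lo..hi} z)"
      by (rule ennreal_leI)
    show "ennreal (f z) * ennreal (psi x y (eta * z) m) \<le> ennreal (L * \<bar>y - x\<bar>) * indicator {lo..hi} z"
    proof -
      have e1: "ennreal (f z) * ennreal (psi x y (eta * z) m) = ennreal (f z * psi x y (eta * z) m)"
        using fn psi_nonneg[of x y "eta*z" m] by (simp add: ennreal_mult)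
      have e2: "ennreal (L * \<bar>y - x\<bar> * indicator {lo..hi} z) = ennreal (L * \<bar>y - x\<bar>) * indicator {lo..hi} z"
        by (cases "z \<in> {lo..hi}") auto
      show ?thesis by (subst e1, subst e2[symmetric], rule le)
    qed
  qed
  also have "\<dots> = ennreal (L * \<bar>y - x\<bar>) * ennreal (hi - lo)"
    using lohi by (simp add: nn_integral_cmult_indicator)
  also have "\<dots> = ennreal (L / eta * (y - x)^2)"
    using lohi L0 eta by (simp add: ennreal_mult[symmetric] power2_eq_square abs_mult_self_eq)
  finally show ?thesis .
qed

lemma PP_prob: "prob_space (PiM {..<N} (\<lambda>_. Zdist f))"
  by (rule prob_space_PiM) (use Zp in auto)

lemma sets_Z: "sets (Zdist f) = sets borel"
  unfolding Zdist_def by simp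

lemma Vmeas: "(\<lambda>w. Max ((\<lambda>j. G j + eta * w j) ` {..<N})) \<in> borel_measurable (PiM {..<N} (\<lambda>_. Zdist f))"
proof (rule borel_measurable_Max)
  fix j assume "j \<in> {..<N}"
  hence "(\<lambda>w. w j) \<in> borel_measurable (PiM {..<N} (\<lambda>_. Zdist f))"
    using measurable_component_singleton[of j "{..<N}" "\<lambda>_. Zdist f"]
    by (simp add: measurable_cong_sets[OF refl sets_Z])
  thus "(\<lambda>w. G j + eta * w j) \<in> borel_measurable (PiM {..<N} (\<lambda>_. Zdist f))" by simp
qed simp

lemma key:
  fixes G :: "nat \<Rightarrow> real" and x y :: real
  assumes intg: "\<And>G. integrable (PiM {..<N} (\<lambda>_. Zdist f)) (\<lambda>w. Max ((\<lambda>j. G j + eta * w j) ` {..<N}))"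
    and i: "i < N"
  defines "q \<equiv> \<integral> w. (if Max ((\<lambda>j. (G(i:=x)) j + eta * w j) ` {..<N}) \<le> x + eta * w i then 1 else 0)
                 \<partial>(PiM {..<N} (\<lambda>_. Zdist f))"
  shows "0 \<le> q \<and> q \<le> 1 \<and>
   0 \<le> smoothed_pot N eta f (G(i:=y)) - smoothed_pot N eta f (G(i:=x)) - q*(y-x) \<and>
   smoothed_pot N eta f (G(i:=y)) - smoothed_pot N eta f (G(i:=x)) - q*(y-x) \<le> L/eta*(y-x)^2"
proof -
  let ?P = "PiM {..<N} (\<lambda>_. Zdist f)"
  interpret PP: prob_space ?P by (rule PP_prob)
  define S where "S = {..<N} - {i}"
  define M where "M w = Max ((\<lambda>j. G j + eta * w j) ` S)" for w :: "nat \<Rightarrow> real"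
  define Vx where "Vx w = Max ((\<lambda>j. (G(i:=x)) j + eta * w j) ` {..<N})" for w :: "nat \<Rightarrow> real"
  define Vy where "Vy w = Max ((\<lambda>j. (G(i:=y)) j + eta * w j) ` {..<N})" for w :: "nat \<Rightarrow> real"
  define ind where "ind w = (if Vx w \<le> x + eta * w i then 1 else (0::real))" for w :: "nat \<Rightarrow> real"
  define ps where "ps w = Vy w - Vx w - (y - x) * ind w" for w
  have qdef: "q = integral\<^sup>L ?P ind" unfolding q_def ind_def Vx_def by simp
  have Nis: "{..<N} = insert i S" using i by (auto simp: S_def)
  have fS: "finite S" "i \<notin> S" by (auto simp: S_def)
  have img: "(\<lambda>j. (G(i:=z)) j + eta * w j) ` {..<N} = insert (z + eta * w i) ((\<lambda>j. G j + eta*w j) ` S)" for z w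
    unfolding Nis using fS(2) by (auto intro!: image_cong)
  have ps_eq: "ps w = (if S = {} then 0 else psi x y (eta * w i) (M w))" for w
  proof (cases "S = {}")
    case True
    thus ?thesis unfolding ps_def Vx_def Vy_def ind_def img by simp
  next
    case False
    have "Vx w = max (x + eta * w i) (M w)" "Vy w = max (y + eta * w i) (M w)"
      unfolding Vx_def Vy_def img M_def using False fS by (simp_all add: Max_insert)
    thus ?thesis using False unfolding ps_def ind_def psi_def by (auto simp: max_def)
  qed
  have ps_nn: "0 \<le> ps w" for w unfolding ps_eq by (simp add: psi_nonneg)
  have mVx: "Vx \<in> borel_measurable ?P" unfolding Vx_def by (rule Vmeas)
  have mVy: "Vy \<in> borel_measurable ?P" unfolding Vy_def by (rule Vmeas)
  have mcomp: "(\<lambda>w. w i) \<in> borel_measurable ?P"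
    using measurable_component_singleton[of i "{..<N}" "\<lambda>_. Zdist f"] i
    by (simp add: measurable_cong_sets[OF refl sets_Z])
  have mind: "ind \<in> borel_measurable ?P"
    unfolding ind_def using mVx mcomp by measurable
  have iind: "integrable ?P ind"
    by (rule PP.integrable_const_bound[where B=1]) (auto simp: ind_def mind)
  have iVx: "integrable ?P Vx" unfolding Vx_def by (rule intg)
  have iVy: "integrable ?P Vy" unfolding Vy_def by (rule intg)
  have mps: "ps \<in> borel_measurable ?P" unfolding ps_def using mVx mVy mind by measurable
  have intps: "integral\<^sup>L ?P ps = smoothed_pot N eta f (G(i:=y)) - smoothed_pot N eta f (G(i:=x)) - q*(y-x)"
  proof -
    have "integral\<^sup>L ?P ps = integral\<^sup>L ?P Vy - integral\<^sup>L ?P Vx - (y - x) * integral\<^sup>L ?P ind"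
      unfolding ps_def using iVx iVy iind by simp
    thus ?thesis unfolding qdef smoothed_pot_def Vx_def Vy_def by simp
  qed
  have nnb: "(\<integral>\<^sup>+ w. ennreal (ps w) \<partial>?P) \<le> ennreal (L/eta*(y-x)^2)"
  proof -
    interpret PS: product_sigma_finite "\<lambda>_. Zdist f"
      unfolding product_sigma_finite_def using prob_space_imp_sigma_finite[OF Zp] by simp
    interpret PSP: prob_space "PiM S (\<lambda>_. Zdist f)" by (rule prob_space_PiM) (use Zp in auto)
    have "(\<integral>\<^sup>+ w. ennreal (ps w) \<partial>?P) = (\<integral>\<^sup>+ w. ennreal (ps w) \<partial>PiM (insert i S) (\<lambda>_. Zdist f))"
      by (simp add: Nis)
    also have "\<dots> = (\<integral>\<^sup>+ u. (\<integral>\<^sup>+ z. ennreal (ps (u(i:=z))) \<partial>Zdist f) \<partial>PiM S (\<lambda>_. Zdist f))"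
      by (rule PS.product_nn_integral_insert) (use fS mps Nis in auto)
    also have "\<dots> \<le> (\<integral>\<^sup>+ u. ennreal (L/eta*(y-x)^2) \<partial>PiM S (\<lambda>_. Zdist f))"
    proof (rule nn_integral_mono)
      fix u :: "nat \<Rightarrow> real"
      have Mu: "M (u(i:=z)) = M u" for z
        unfolding M_def using fS(2) by (auto intro!: arg_cong[where f=Max] image_cong)
      show "(\<integral>\<^sup>+ z. ennreal (ps (u(i:=z))) \<partial>Zdist f) \<le> ennreal (L/eta*(y-x)^2)"
      proof (cases "S = {}")
        case True thus ?thesis by (simp add: ps_eq)
      next
        case False thus ?thesis using inner_bound[of x y "M u"] by (simp add: ps_eq Mu)
      qed
    qed
    also have "\<dots> = ennreal (L/eta*(y-x)^2)"
      using PSP.emeasure_space_1 by simp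
    finally show ?thesis .
  qed
  have "integral\<^sup>L ?P ps = enn2real (\<integral>\<^sup>+ w. ennreal (ps w) \<partial>?P)"
    by (rule integral_eq_nn_integral) (use mps ps_nn in auto)
  also have "\<dots> \<le> enn2real (ennreal (L/eta*(y-x)^2))"
    by (rule enn2real_mono[OF nnb]) simp
  also have "\<dots> = L/eta*(y-x)^2" using L0 eta by simp
  finally have up: "integral\<^sup>L ?P ps \<le> L/eta*(y-x)^2" .
  have lo: "0 \<le> integral\<^sup>L ?P ps" by (rule integral_nonneg_AE) (simp add: ps_nn)
  have q0: "0 \<le> q" unfolding qdef by (rule integral_nonneg_AE) (simp add: ind_def)
  have q1: "q \<le> 1"
  proof -
    have "q \<le> integral\<^sup>L ?P (\<lambda>_. 1::real)" unfolding qdef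
      by (rule integral_mono) (use iind in \<open>auto simp: ind_def\<close>)
    thus ?thesis by (simp add: PP.prob_space)
  qed
  show ?thesis using up lo q0 q1 intps by simp
qed

lemma intg_transfer:
  assumes "integrable (PiM {..<N} (\<lambda>_. Zdist f)) (\<lambda>w. Max ((\<lambda>j. G j + eta * w j) ` {..<N}))"
  shows "integrable (PiM {..<N} (\<lambda>_. Zdist f)) (\<lambda>w. Max ((\<lambda>j. G' j + eta * w j) ` {..<N}))"
proof -
  let ?P = "PiM {..<N} (\<lambda>_. Zdist f)"
  interpret PP: prob_space ?P by (rule PP_prob)
  define B where "B = (\<Sum>j<N. \<bar>G' j - G j\<bar>)"
  have B0: "0 \<le> B" unfolding B_def by (simp add: sum_nonneg)
  have d: "integrable ?P (\<lambda>w. Max ((\<lambda>j. G' j + eta * w j) ` {..<N}) - Max ((\<lambda>j. G j + eta * w j) ` {..<N}))"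
  proof (rule PP.integrable_const_bound[where B=B])
    show "AE w in ?P. norm (Max ((\<lambda>j. G' j + eta * w j) ` {..<N}) - Max ((\<lambda>j. G j + eta * w j) ` {..<N})) \<le> B"
    proof (rule AE_I2)
      fix w :: "nat \<Rightarrow> real"
      have "\<bar>(G' j + eta * w j) - (G j + eta * w j)\<bar> \<le> B" if "j \<in> {..<N}" for j
      proof -
        have "\<bar>G' j - G j\<bar> \<le> B" unfolding B_def
          by (rule member_le_sum[of j "{..<N}" "\<lambda>j. \<bar>G' j - G j\<bar>"]) (use that in auto)
        thus ?thesis by simp
      qed
      from Max_diff[of "{..<N}", OF _ this B0]
      show "norm (Max ((\<lambda>j. G' j + eta * w j) ` {..<N}) - Max ((\<lambda>j. G j + eta * w j) ` {..<N})) \<le> B"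
        by simp
    qed
  qed (intro borel_measurable_diff Vmeas)
  have "integrable ?P (\<lambda>w. Max ((\<lambda>j. G j + eta * w j) ` {..<N}) +
      (Max ((\<lambda>j. G' j + eta * w j) ` {..<N}) - Max ((\<lambda>j. G j + eta * w j) ` {..<N})))"
    by (rule Bochner_Integration.integrable_add[OF assms d])
  thus ?thesis by simp
qed

lemma arm_bound:
  fixes G0 :: "nat \<Rightarrow> real" and gg e :: real
  assumes i: "i < N" and gg: "-1 \<le> gg" "gg \<le> 0" and e: "0 < e"
  shows "grad N eta f G0 i * bregman N eta f (G0(i := G0 i + gg / grad N eta f G0 i)) G0 \<le> L/eta/(2*e) + e"
proof -
  define p where "p = grad N eta f G0 i"
  define r where "r = gg / p"
  define G1 where "G1 = G0(i := G0 i + r)"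
  define h where "h z = smoothed_pot N eta f (G0(i:=z))" for z
  have c0: "0 \<le> L/eta" using L0 eta by simp
  have G1d: "G1 j - G0 j = (if j = i then r else 0)" for j unfolding G1_def by simp
  have breg: "bregman N eta f G1 G0 = h (G0 i + r) - h (G0 i) - p * r"
  proof -
    have "(\<Sum>j<N. grad N eta f G0 j * (G1 j - G0 j)) = (\<Sum>j<N. if j = i then p * r else 0)"
      by (rule sum.cong) (auto simp: G1d p_def)
    also have "\<dots> = p * r" using i by simp
    finally show ?thesis unfolding bregman_def h_def G1_def by simp
  qed
  have rhs0: "0 \<le> L/eta/(2*e) + e" by (intro add_nonneg_nonneg divide_nonneg_pos) (use L0 eta e in auto)
  show ?thesis
  proof (cases "\<forall>G. integrable (PiM {..<N} (\<lambda>_. Zdist f)) (\<lambda>w. Max ((\<lambda>j. G j + eta * w j) ` {..<N}))")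
    case False
    hence "\<forall>G. \<not> integrable (PiM {..<N} (\<lambda>_. Zdist f)) (\<lambda>w. Max ((\<lambda>j. G j + eta * w j) ` {..<N}))"
      using intg_transfer by blast
    hence z: "smoothed_pot N eta f G = 0" for G
      unfolding smoothed_pot_def by (simp add: not_integrable_integral_eq)
    have "p = 0" unfolding p_def grad_def z by simp
    thus ?thesis using rhs0 unfolding p_def by simp
  next
    case True
    note K = key[OF _ i, of G0, OF spec[OF True]]
    define qq :: "real \<Rightarrow> real" where "qq x = (\<integral> w. (if Max ((\<lambda>j. (G0(i:=x)) j + eta * w j) ` {..<N}) \<le> x + eta * w i then 1 else 0)
                 \<partial>(PiM {..<N} (\<lambda>_. Zdist f)))" for x
    have Kx: "0 \<le> qq x \<and> qq x \<le> 1 \<and> 0 \<le> h y - h x - qq x * (y - x) \<and> h y - h x - qq x * (y - x) \<le> L/eta*(y-x)^2" for x y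
      using K[of x y] unfolding h_def qq_def by simp
    have "(h has_field_derivative qq (G0 i)) (at (G0 i))"
    proof (rule quad_deriv[OF _ c0])
      fix y show "\<bar>h y - h (G0 i) - qq (G0 i) * (y - G0 i)\<bar> \<le> L/eta * (y - G0 i)^2"
        using Kx[of "G0 i" y] by simp
    qed
    hence pq: "p = qq (G0 i)" unfolding p_def grad_def h_def[symmetric]
      by (simp add: DERIV_imp_deriv)
    define D where "D = h (G0 i + r) - h (G0 i) - p * r"
    have D0: "0 \<le> D" "D \<le> L/eta * r^2" using Kx[of "G0 i" "G0 i + r"] pq by (simp_all add: D_def)
    show ?thesis
    proof (cases "p = 0")
      case True thus ?thesis using rhs0 unfolding p_def by simp
    next
      case False
      hence pp: "0 < p" using Kx[of "G0 i" "G0 i"] pq by simp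
      have r0: "r \<le> 0" unfolding r_def using pp gg by (simp add: divide_nonpos_pos)
      have "0 \<le> h (G0 i) - h (G0 i + r) - qq (G0 i + r) * (G0 i - (G0 i + r))"
        using Kx[of "G0 i + r" "G0 i"] by simp
      moreover have "0 \<le> qq (G0 i + r)" using Kx by simp
      hence "qq (G0 i + r) * r \<le> 0" using r0 by (rule mult_nonneg_nonpos)
      ultimately have "h (G0 i + r) \<le> h (G0 i)" by simp
      hence "D \<le> - p * r" unfolding D_def by simp
      also have "- p * r = - gg" unfolding r_def using pp by simp
      finally have D1: "D \<le> 1" using gg by simp
      have "D \<le> L/eta * r^2" by (rule D0(2))
      also have "L/eta * r^2 = L/eta * gg^2 / p^2" unfolding r_def by (simp add: power_divide)
      also have "\<dots> \<le> L/eta * 1 / p^2"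
      proof -
        have "gg^2 \<le> 1" using gg by (simp add: abs_square_le_1)
        thus ?thesis using c0 by (intro divide_right_mono mult_left_mono) auto
      qed
      finally have D2: "D \<le> L/eta / p^2" by simp
      have "p * D \<le> L/eta/(2*e) + e" by (rule arith_bound[OF pp D0(1) D1 D2 c0 e])
      thus ?thesis unfolding p_def[symmetric] r_def[symmetric] G1_def[symmetric] breg D_def[symmetric] .
    qed
  qed
qed

end

lemma gbpa_hist:
  "(\<forall>k. 1 \<le> k \<and> k \<le> s \<longrightarrow> h1 k = h2 k) \<Longrightarrow> gbpa_G N eta f g h1 s = gbpa_G N eta f g h2 s"
proof (induction s)
  case 0 thus ?case by simp
next
  case (Suc s)
  hence "gbpa_G N eta f g h1 s = gbpa_G N eta f g h2 s" by simp
  moreover have "h1 (Suc s) = h2 (Suc s)" using Suc.prems by simp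
  ultimately show ?case by (simp add: Let_def)
qed

theorem theorem1:
  fixes N T t :: nat and eta eps L :: real and f :: "real \<Rightarrow> real"
    and g :: "nat \<Rightarrow> nat \<Rightarrow> real" and hist :: "nat \<Rightarrow> nat"
  assumes N_pos: "N \<ge> 1"
    and f_meas: "f \<in> borel_measurable borel"
    and f_nonneg: "\<forall>z. 0 \<le> f z"
    and f_bound: "\<forall>z. f z \<le> L"
    and Z_prob: "prob_space (Zdist f)"
    and Z_supp: "emeasure (Zdist f) (- {0..1}) = 0"
    and F_low: "Sup {z. cdf (Zdist f) z = 0} = 0"
    and F_up: "Inf {z. cdf (Zdist f) z = 1} = 1"
    and eta_pos: "eta > 0"
    and gains: "\<forall>s\<in>{1..T}. \<forall>i<N. -1 \<le> g s i \<and> g s i \<le> 0"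
    and t_range: "1 \<le> t" "t \<le> T"
    and hist_arms: "\<forall>s\<in>{1..<t}. hist s < N"
    and hist_pos: "(\<Prod>s\<in>{1..<t}. grad N eta f (gbpa_G N eta f g hist (s - 1)) (hist s)) > 0"
    and eps: "0 < eps" "eps < 1"
  shows "(\<Sum>i<N. grad N eta f (gbpa_G N eta f g hist (t - 1)) i *
            bregman N eta f (gbpa_G N eta f g (hist(t := i)) t) (gbpa_G N eta f g hist (t - 1)))
         \<le> real N * L * (1 / (2 * eta * eps) + 1 - inv_cdf f (1 - eps))"
proof -
  define G0 where "G0 = gbpa_G N eta f g hist (t - 1)"
  obtain t' where t': "t = Suc t'" using t_range by (cases t) auto
  have eq: "gbpa_G N eta f g (hist(t := i)) t = G0(i := G0 i + g t i / grad N eta f G0 i)" for i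
  proof -
    have h: "gbpa_G N eta f g (hist(t := i)) t' = G0"
      unfolding G0_def using t' by (simp, intro gbpa_hist) auto
    show ?thesis unfolding t' using h t' by (simp add: Let_def)
  qed
  have each: "grad N eta f G0 i * bregman N eta f (gbpa_G N eta f g (hist(t := i)) t) G0
      \<le> L/eta/(2*eps) + eps" if i: "i \<in> {..<N}" for i
  proof -
    have "-1 \<le> g t i" "g t i \<le> 0" using gains t_range i by auto
    thus ?thesis unfolding eq
      using arm_bound[OF f_meas f_nonneg f_bound Z_prob eta_pos, where i=i and gg="g t i" and e=eps] i eps by simp
  qed
  have "(\<Sum>i<N. grad N eta f G0 i * bregman N eta f (gbpa_G N eta f g (hist(t := i)) t) G0)
      \<le> real (card {..<N}) * (L/eta/(2*eps) + eps)"
    by (rule sum_bounded_above) (rule each)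
  also have "\<dots> \<le> real N * (L * (1 / (2 * eta * eps) + 1 - inv_cdf f (1 - eps)))"
  proof -
    have "eps \<le> L * (1 - inv_cdf f (1 - eps))"
      by (rule zdist_inv_cdf[OF f_meas f_nonneg f_bound Z_prob Z_supp eps])
    moreover have "L/eta/(2*eps) = L * (1 / (2 * eta * eps))" by simp
    ultimately have "L/eta/(2*eps) + eps \<le> L * (1 / (2 * eta * eps) + 1 - inv_cdf f (1 - eps))"
      by (simp add: algebra_simps)
    thus ?thesis by (simp add: mult_left_mono)
  qed
  finally show ?thesis unfolding G0_def by (simp add: mult.assoc)
qed

end
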